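(* Consider the network system $\mathbf{\Sigma}$ and, for a given clustering matrix $\Pi\in\mathbb{R}^{n\times r}$, the reduced network system $\hat{\mathbf{\Sigma}}$ (both described in the context). If the scalars $\alpha,\beta$ satisfy $\alpha\beta=\mathbf{tr}(\hat{E})/\mathbf{tr}(E)$, then the error system $\mathbf{\Sigma_e}=\mathbf{\Sigma}-\hat{\mathbf{\Sigma}}$ is BIBO stable for all $\hat{W}\in\mathbb{D}_{++}^{|\hat{\mathcal{E}}|}$ and all $\hat{E}\in\mathbb{D}_{++}^{r}$.
   Context: $\mathbb{D}_{++}^k$ denotes the set of $k\times k$ diagonal matrices with positive diagonal entries; $\mathbf{1}_k$ is the all-ones vector of length $k$. Let $\mathcal{G}$ be a simple, undirected, connected graph with node set $\{1,\dots,n\}$ and $|\mathcal{E}|$ edges, each edge labeled and given an arbitrary orientation. Its incidence matrix $D\in\mathbb{R}^{n\times|\mathcal{E}|}$ has $[D]_{il}=+1$ if edge $l$ is directed from node $i$, $-1$ if edge $l$ is directed towards node $i$, and $0$ otherwise. Let $W\in\mathbb{D}_{++}^{|\mathcal{E}|}$ (edge weights), $E\in\mathbb{D}_{++}^{n}$ (nodal time-scales), $L=DWD^T$, $F\in\mathbb{R}^{n\times p}$, $H\in\mathbb{R}^{q\times n}$. The network system $\mathbf{\Sigma}$ is $E\dot{x}=-Lx+Fu$, $y=Hx$, with transfer function $\mathbf{\Sigma}(s)=H(sI_n+E^{-1}L)^{-1}E^{-1}F$. A clustering is a partition of $\{1,\dots,n\}$ into $r$ nonempty disjoint clusters $\mathcal{C}_1,\dots,\mathcal{C}_r$,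 with characteristic matrix $\Pi\in\mathbb{R}^{n\times r}$, $[\Pi]_{ij}=1$ if $i\in\mathcal{C}_j$ and $0$ otherwise. The reduced incidence matrix $\hat{D}\in\mathbb{R}^{r\times|\hat{\mathcal{E}}|}$ is obtained from $\Pi^TD$ by removing all zero columns and all duplicate columns. For $\hat{W}\in\mathbb{D}_{++}^{|\hat{\mathcal{E}}|}$, $\hat{E}\in\mathbb{D}_{++}^{r}$ and scalars $\alpha,\beta$, set $\hat{L}=\hat{D}\hat{W}\hat{D}^T$, $\hat{F}=\Pi^TF$, $\hat{H}=H\Pi$; the reduced system $\hat{\mathbf{\Sigma}}$ is $\hat{E}\dot{\hat{x}}=-\hat{L}\hat{x}+\beta\hat{F}u$, $\hat{y}=\alpha\hat{H}\hat{x}$, with transfer function $\hat{\mathbf{\Sigma}}(s)=\alpha\hat{H}(sI_r+\hat{E}^{-1}\hat{L})^{-1}\beta\hat{E}^{-1}\hat{F}$. The error system $\mathbf{\Sigma_e}$ has transfer function $\mathbf{\Sigma}(s)-\hat{\mathbf{\Sigma}}(s)$ (realized by the block-diagonal state matrix $\mathrm{diag}(-E^{-1}L,-\hat{E}^{-1}\hat{L})$, input matrix $[E^{-1}F;\beta\hat{E}^{-1}\hat{F}]$ and output matrix $[H,\,-\alpha\hat{H}]$). BIBO stable means all poles of the transfer function have negative real part. *)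

theory Defs
  imports "HOL-Analysis.Analysis" "HOL-Complex_Analysis.Complex_Analysis"
begin

definition diagm :: "('n::finite \<Rightarrow> 'a::zero) \<Rightarrow> 'a^'n^'n" where
  "diagm d = (\<chi> i j. if i = j then d i else 0)"

definition tr_diag :: "('n::finite \<Rightarrow> real) \<Rightarrow> real" where
  "tr_diag d = (\<Sum>i\<in>UNIV. d i)"

definition cmat :: "real^'c^'r \<Rightarrow> complex^'c^'r" where
  "cmat A = (\<chi> i j. complex_of_real (A $ i $ j))"

definition incidence_matrix :: "real^'e^'n \<Rightarrow> bool" where
  "incidence_matrix D \<longleftrightarrow>
     (\<forall>l. \<exists>i j. i \<noteq> j \<and> D $ i $ l = 1 \<and> D $ j $ l = -1 \<and>
                 (\<forall>k. k \<noteq> i \<and> k \<noteq> j \<longrightarrow> D $ k $ l = 0))"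

text \<open>Simple graph: no two edges join the same pair of nodes (in either orientation).
  Self-loops are already excluded by incidence_matrix.\<close>
definition simple_incidence :: "real^'e^'n \<Rightarrow> bool" where
  "simple_incidence D \<longleftrightarrow>
     (\<forall>l l'. l \<noteq> l' \<longrightarrow> column l D \<noteq> column l' D \<and> column l D \<noteq> - column l' D)"

definition adj :: "real^'e^'n \<Rightarrow> ('n \<times> 'n) set" where
  "adj D = {(i, j). \<exists>l. D $ i $ l \<noteq> 0 \<and> D $ j $ l \<noteq> 0 \<and> i \<noteq> j}"

definition connected_incidence :: "real^'e^'n \<Rightarrow> bool" where
  "connected_incidence D \<longleftrightarrow> (\<forall>i j. (i, j) \<in> (adj D)\<^sup>*)"

text \<open>Characteristic matrix of a clustering (partition of the nodes into the
  nonempty clusters indexed by 'r).\<close>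
definition clustering_matrix :: "real^'r^'n \<Rightarrow> bool" where
  "clustering_matrix P \<longleftrightarrow>
     (\<forall>i j. P $ i $ j = 0 \<or> P $ i $ j = 1) \<and>
     (\<forall>i. \<exists>!j. P $ i $ j = 1) \<and>
     (\<forall>j. \<exists>i. P $ i $ j = 1)"

text \<open>Columns of the reduced incidence matrix: the distinct nonzero columns of
  \<Pi>^T D.  They are used as the index set of the reduced edges.\<close>
definition reduced_edges :: "real^'r^'n \<Rightarrow> real^'e^'n \<Rightarrow> (real^'r) set" where
  "reduced_edges P D = {c. c \<in> columns (transpose P ** D) \<and> c \<noteq> 0}"

text \<open>Reduced Laplacian \<hat>D \<hat>W \<hat>D^T = sum over reduced edges c of \<hat>w(c) c c^T.\<close>
definition reduced_laplacian :: "real^'r^'n \<Rightarrow> real^'e^'n \<Rightarrow> (real^'r \<Rightarrow> real) \<Rightarrow> real^'r^'r" where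
  "reduced_laplacian P D wh =
     (\<Sum>c\<in>reduced_edges P D. wh c *\<^sub>R (\<chi> i j. c $ i * c $ j))"

text \<open>Transfer function of  E x' = -L x + F u, y = H x:
  s \<mapsto> H (s I + E^{-1} L)^{-1} E^{-1} F.\<close>
definition transfer_fun ::
  "real^'x^'q \<Rightarrow> ('x::finite \<Rightarrow> real) \<Rightarrow> real^'x^'x \<Rightarrow> real^'p^'x \<Rightarrow> complex \<Rightarrow> complex^'p^'q" where
  "transfer_fun H e L F s =
     cmat H ** matrix_inv (mat s + cmat (diagm (\<lambda>i. inverse (e i)) ** L))
       ** cmat (diagm (\<lambda>i. inverse (e i)) ** F)"

definition bibo_stable :: "(complex \<Rightarrow> complex^'p^'q) \<Rightarrow> bool" where
  "bibo_stable G \<longleftrightarrow> (\<forall>i j z. is_pole (\<lambda>s. G s $ i $ j) z \<longrightarrow> Re z < 0)"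

end

theory Submission
  imports Defs
begin

no_notation fps_nth (infixl \<open>$\<close> 75)

lemma sum_delta_mult:
  fixes a b :: "'n::finite \<Rightarrow> 'a::semiring_0"
  shows "(\<Sum>k\<in>UNIV. (if i = k then a k else 0) * b k) = a i * b i"
    "(\<Sum>k\<in>UNIV. b k * (if k = i then a k else 0)) = b i * a i"
proof -
  have e1: "(\<lambda>k. (if i = k then a k else 0) * b k) = (\<lambda>k. if i = k then a k * b k else 0)" by auto
  show "(\<Sum>k\<in>UNIV. (if i = k then a k else 0) * b k) = a i * b i" by (subst e1) simp
  have e2: "(\<lambda>k. b k * (if k = i then a k else 0)) = (\<lambda>k. if k = i then b k * a k else 0)" by auto
  show "(\<Sum>k\<in>UNIV. b k * (if k = i then a k else 0)) = b i * a i" by (subst e2) simp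
qed

lemma sum_two:
  fixes f :: "'a::finite \<Rightarrow> 'b::comm_monoid_add"
  assumes "a \<noteq> b" "\<And>k. k \<noteq> a \<Longrightarrow> k \<noteq> b \<Longrightarrow> f k = 0"
  shows "sum f UNIV = f a + f b"
proof -
  have "sum f UNIV = sum f {a,b}"
    by (rule sum.mono_neutral_right) (use assms in auto)
  then show ?thesis using assms by simp
qed

lemma det_nz_of_ker:
  fixes A :: "'a::field^'n^'n"
  assumes "\<And>v. A *v v = 0 \<Longrightarrow> v = 0"
  shows "det A \<noteq> 0"
proof -
  have "inj ((*v) A)"
  proof (rule injI)
    fix x y assume "A *v x = A *v y"
    then have "A *v (x - y) = 0" by (simp add: matrix_vector_mult_diff_distrib)
    then have "x - y = 0" by (rule assms)
    then show "x = y" by simp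
  qed
  then show ?thesis
    using det_nz_iff_inj_gen[OF matrix_vector_mul_linear_gen, of A]
    by (simp add: matrix_of_matrix_vector_mul)
qed

lemma matrix_inv_eq:
  fixes A B :: "'a::field^'n^'n"
  assumes "A ** B = mat 1"
  shows "matrix_inv A = B"
proof -
  have BA: "B ** A = mat 1" using assms matrix_left_right_inverse by blast
  let ?C = "matrix_inv A"
  have "A ** ?C = mat 1 \<and> ?C ** A = mat 1"
    unfolding matrix_inv_def by (rule someI[of _ B]) (use assms BA in auto)
  then have "?C = ?C ** (A ** B)" using assms by (simp add: matrix_mul_rid)
  also have "\<dots> = (?C ** A) ** B" by (simp add: matrix_mul_assoc)
  also have "\<dots> = B" using \<open>A ** ?C = mat 1 \<and> ?C ** A = mat 1\<close> by (simp add: matrix_mul_lid)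
  finally show ?thesis .
qed

lemma matrix_inv_right:
  fixes A :: "'a::field^'n^'n"
  assumes "det A \<noteq> 0"
  shows "A ** matrix_inv A = mat 1"
proof -
  obtain B where "A ** B = mat 1" using assms invertible_det_nz invertible_right_inverse by blast
  then show ?thesis using matrix_inv_eq by metis
qed

lemma inv_entry:
  fixes A :: "'a::field^'n^'n"
  assumes "det A \<noteq> 0"
  shows "matrix_inv A $ k $ j = det (\<chi> i l. if l = k then (if i = j then 1 else 0) else A$i$l) / det A"
proof -
  let ?b = "(\<chi> i. if i = j then 1 else 0) :: 'a^'n"
  let ?x = "matrix_inv A *v ?b"
  have "A *v ?x = ?b"
    using matrix_inv_right[OF assms] by (simp add: matrix_vector_mul_assoc)
  then have "?x = (\<chi> k. det(\<chi> i l. if l=k then ?b$i else A$i$l) / det A)"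
    using cramer[OF assms] by blast
  then have "?x $ k = det(\<chi> i l. if l=k then ?b$i else A$i$l) / det A" by simp
  moreover have "?x $ k = matrix_inv A $ k $ j"
    by (simp add: matrix_vector_mult_def if_distrib cong: if_cong)
  ultimately show ?thesis by (simp cong: if_cong)
qed

lemma det_isCont:
  fixes A :: "complex \<Rightarrow> complex^'n^'n"
  assumes "\<And>i j. isCont (\<lambda>s. A s $ i $ j) z"
  shows "isCont (\<lambda>s. det (A s)) z"
  unfolding det_def by (intro continuous_intros assms)

lemma mult_isCont:
  fixes A :: "complex \<Rightarrow> complex^'m^'n" and B :: "complex \<Rightarrow> complex^'k^'m"
  assumes "\<And>i j. isCont (\<lambda>s. A s $ i $ j) z" "\<And>i j. isCont (\<lambda>s. B s $ i $ j) z"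
  shows "isCont (\<lambda>s. (A s ** B s) $ i $ j) z"
  unfolding matrix_matrix_mult_def by (simp, intro continuous_intros assms)

lemma inv_isCont:
  fixes A :: "complex \<Rightarrow> complex^'n^'n"
  assumes c: "\<And>i j. isCont (\<lambda>s. A s $ i $ j) z" and d: "det (A z) \<noteq> 0"
  shows "isCont (\<lambda>s. matrix_inv (A s) $ k $ j) z"
proof -
  let ?N = "\<lambda>s. det (\<chi> i l. if l = k then (if i = j then 1 else 0) else A s $i$l) / det (A s)"
  have cd: "isCont (\<lambda>s. det (A s)) z" by (rule det_isCont[OF c])
  have cn: "isCont (\<lambda>s. det ((\<chi> i l. if l = k then (if i = j then 1 else 0) else A s $i$l) :: complex^'n^'n)) z"
  proof (rule det_isCont)
    fix i l
    show "isCont (\<lambda>s. (\<chi> i l. if l = k then (if i = j then 1 else 0) else A s $i$l) $ i $ l :: complex) z"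
      by (cases "l = k") (simp_all add: c)
  qed
  have "isCont ?N z" using cd cn d by (intro continuous_intros) auto
  then have t: "(?N \<longlongrightarrow> ?N z) (at z)" by (simp add: isCont_def)
  have ev: "eventually (\<lambda>s. det (A s) \<noteq> 0) (at z)"
    using cd d unfolding isCont_def by (rule tendsto_imp_eventually_ne)
  have ev2: "eventually (\<lambda>s. ?N s = matrix_inv (A s) $ k $ j) (at z)"
    using ev by eventually_elim (simp add: inv_entry)
  have "((\<lambda>s. matrix_inv (A s) $ k $ j) \<longlongrightarrow> ?N z) (at z)"
    by (rule Lim_transform_eventually[OF t ev2])
  then show ?thesis using inv_entry[OF d] by (simp add: isCont_def)
qed


lemma cnj_mult_self: "cnj z * z = complex_of_real ((cmod z)^2)"
  by (metis complex_norm_square mult.commute of_real_power)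

lemma diagm_mult: "diagm d ** A = (\<chi> i j. d i * A$i$j)"
  by (simp add: vec_eq_iff matrix_matrix_mult_def diagm_def sum_delta_mult)

definition smat :: "'a::times \<Rightarrow> 'a^'m^'n \<Rightarrow> 'a^'m^'n" where
  "smat c A = (\<chi> i j. c * A$i$j)"

lemma madd_r: "((A::'a::comm_semiring_1^'m^'n) + B) ** C = A ** C + B ** C"
  by (simp add: vec_eq_iff matrix_matrix_mult_def distrib_right sum.distrib)
lemma msub_l: "(A::'a::comm_ring_1^'m^'n) ** (B - C) = A ** B - A ** C"
  by (simp add: vec_eq_iff matrix_matrix_mult_def right_diff_distrib sum_subtractf)
lemma msub_r: "((A::'a::comm_ring_1^'m^'n) - B) ** C = A ** C - B ** C"
  by (simp add: vec_eq_iff matrix_matrix_mult_def left_diff_distrib sum_subtractf)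
lemma mzero_l: "(0::'a::comm_semiring_1^'m^'n) ** A = 0"
  by (simp add: vec_eq_iff matrix_matrix_mult_def)
lemma mzero_r: "(A::'a::comm_semiring_1^'m^'n) ** 0 = 0"
  by (simp add: vec_eq_iff matrix_matrix_mult_def)
lemma smat_mult_left: "(A::'a::comm_semiring_1^'m^'n) ** smat c B = smat c (A ** B)"
  by (simp add: vec_eq_iff matrix_matrix_mult_def smat_def sum_distrib_left mult_ac)
lemma smat_mult_right: "smat c (A::'a::comm_semiring_1^'m^'n) ** B = smat c (A ** B)"
  by (simp add: vec_eq_iff matrix_matrix_mult_def smat_def sum_distrib_left mult_ac)
lemma mat_mult_l: "mat c ** (A::'a::comm_semiring_1^'m^'n) = smat c A"
  by (simp add: vec_eq_iff matrix_matrix_mult_def smat_def mat_def sum_delta_mult)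
lemma mult_mat_r: "(A::'a::comm_semiring_1^'m^'n) ** mat c = smat c A"
  by (simp add: vec_eq_iff matrix_matrix_mult_def smat_def mat_def sum_delta_mult mult.commute)
lemma smat_smat: "smat a (smat b A) = smat (a * b) (A::'a::comm_semiring_1^'m^'n)"
  by (simp add: vec_eq_iff smat_def mult_ac)
lemma smat_one: "smat 1 (A::'a::comm_semiring_1^'m^'n) = A"
  by (simp add: vec_eq_iff smat_def)

locale lap =
  fixes L :: "real^'n::finite^'n" and e :: "'n \<Rightarrow> real" and K :: "'k set"
    and w :: "'k \<Rightarrow> real" and c :: "'k \<Rightarrow> real^'n"
  assumes finK: "finite K" and wpos: "\<And>k. k \<in> K \<Longrightarrow> w k > 0" and epos: "\<And>i. e i > 0"
    and csum: "\<And>k. k \<in> K \<Longrightarrow> (\<Sum>i\<in>UNIV. c k $ i) = 0"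
    and Ldef: "L = (\<Sum>k\<in>K. w k *\<^sub>R (\<chi> i j. c k $ i * c k $ j))"
    and conn: "\<And>(v::real^'n) i j. (\<forall>k\<in>K. (\<Sum>i\<in>UNIV. c k $ i * v $ i) = 0) \<Longrightarrow> v $ i = v $ j"
begin

definition "T = tr_diag e"

lemma ene: "e i \<noteq> 0"
  using epos[of i] by simp

lemma T_pos: "T > 0"
  unfolding T_def tr_diag_def by (rule sum_pos) (auto simp: epos)

definition Mc :: "complex^'n^'n" where "Mc = cmat (diagm (\<lambda>i. inverse (e i)) ** L)"
definition P0 :: "complex^'n^'n" where "P0 = (\<chi> i j. of_real (e j / T))"

lemma Mc_entry: "Mc $ i $ j = of_real (L$i$j / e i)"
  by (simp add: Mc_def cmat_def diagm_mult field_simps)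

lemma L_entry: "L$i$j = (\<Sum>k\<in>K. w k * (c k $ i * c k $ j))"
  by (simp add: Ldef)

lemma L_sym: "L$i$j = L$j$i"
  by (simp add: L_entry mult.commute)

lemma L_rowsum: "(\<Sum>j\<in>UNIV. L$i$j) = 0"
proof -
  have "(\<Sum>j\<in>UNIV. L$i$j) = (\<Sum>k\<in>K. w k * c k $ i * (\<Sum>j\<in>UNIV. c k $ j))"
    unfolding L_entry by (subst sum.swap) (simp add: sum_distrib_left mult.assoc)
  also have "\<dots> = 0" by (simp add: csum)
  finally show ?thesis .
qed

lemma L_colsum: "(\<Sum>i\<in>UNIV. L$i$j) = 0"
  using L_rowsum[of j] by (simp add: L_sym)

lemma qf: "(\<Sum>i\<in>UNIV. cnj (v$i) * (\<Sum>j\<in>UNIV. of_real (L$i$j) * v$j)) =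
    of_real (\<Sum>k\<in>K. w k * (cmod (\<Sum>i\<in>UNIV. of_real (c k$i) * v$i))^2)"
proof -
  have "(\<Sum>i\<in>UNIV. cnj (v$i) * (\<Sum>j\<in>UNIV. of_real (L$i$j) * v$j)) =
      (\<Sum>i\<in>UNIV. \<Sum>j\<in>UNIV. \<Sum>k\<in>K. of_real (w k * c k$i * c k$j) * (cnj (v$i) * v$j))"
    by (simp add: L_entry sum_distrib_left sum_distrib_right mult_ac)
  also have "\<dots> = (\<Sum>k\<in>K. \<Sum>i\<in>UNIV. \<Sum>j\<in>UNIV. of_real (w k * c k$i * c k$j) * (cnj (v$i) * v$j))"
    by (subst sum.swap) (simp add: sum.swap[of _ UNIV K])
  also have "\<dots> = (\<Sum>k\<in>K. of_real (w k) * ((\<Sum>i\<in>UNIV. of_real (c k$i) * cnj (v$i)) * (\<Sum>j\<in>UNIV. of_real (c k$j) * v$j)))"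
    by (simp add: sum_product sum_distrib_left mult_ac)
  also have "\<dots> = (\<Sum>k\<in>K. of_real (w k) * (cnj (\<Sum>i\<in>UNIV. of_real (c k$i) * v$i) * (\<Sum>j\<in>UNIV. of_real (c k$j) * v$j)))"
    by simp
  also have "\<dots> = of_real (\<Sum>k\<in>K. w k * (cmod (\<Sum>i\<in>UNIV. of_real (c k$i) * v$i))^2)"
    by (simp only: cnj_mult_self of_real_mult of_real_sum)
  finally show ?thesis .
qed

lemma Mc_P0: "Mc ** P0 = 0"
proof -
  have "(\<Sum>k\<in>UNIV. of_real (L$i$k / e i) * of_real (e j / T)) = (0::complex)" for i j
  proof -
    have "(\<Sum>k\<in>UNIV. of_real (L$i$k / e i) * of_real (e j / T)) =
        (of_real (\<Sum>k\<in>UNIV. L$i$k / e i * (e j / T)) :: complex)"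
      by (simp only: of_real_sum of_real_mult)
    also have "\<dots> = of_real ((\<Sum>k\<in>UNIV. L$i$k) / e i * (e j / T))"
      by (simp only: sum_distrib_right sum_divide_distrib)
    finally show ?thesis by (simp add: L_rowsum)
  qed
  then show ?thesis by (simp add: vec_eq_iff matrix_matrix_mult_def Mc_entry P0_def)
qed

lemma P0_Mc: "P0 ** Mc = 0"
proof -
  have "(\<Sum>k\<in>UNIV. of_real (e k / T) * of_real (L$k$j / e k)) = (0::complex)" for j
  proof -
    have "(\<Sum>k\<in>UNIV. of_real (e k / T) * of_real (L$k$j / e k)) =
        (of_real (\<Sum>k\<in>UNIV. e k / T * (L$k$j / e k)) :: complex)"
      by (simp only: of_real_sum of_real_mult)
    also have "\<dots> = of_real (\<Sum>k\<in>UNIV. L$k$j / T)"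
      using ene by (intro arg_cong[where f=of_real] sum.cong) (auto simp: field_simps)
    also have "\<dots> = of_real ((\<Sum>k\<in>UNIV. L$k$j) / T)"
      by (simp add: sum_divide_distrib)
    finally show ?thesis by (simp add: L_colsum)
  qed
  then show ?thesis by (simp add: vec_eq_iff matrix_matrix_mult_def Mc_entry P0_def)
qed

lemma P0_P0: "P0 ** P0 = P0"
proof -
  have "(\<Sum>k\<in>UNIV. of_real (e k / T) * of_real (e j / T)) = (of_real (e j / T)::complex)" for j
  proof -
    have "(\<Sum>k\<in>UNIV. of_real (e k / T) * of_real (e j / T)) =
        (of_real ((\<Sum>k\<in>UNIV. e k) / T * (e j / T)) :: complex)"
      by (simp add: sum_distrib_right sum_divide_distrib)
    then show ?thesis using T_pos by (simp add: T_def tr_diag_def)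
  qed
  then show ?thesis by (simp add: vec_eq_iff matrix_matrix_mult_def P0_def)
qed

lemma matvec_entry: "((mat z + A) *v v) $ i = z * v$i + (\<Sum>j\<in>UNIV. A$i$j * v$j)"
  for A :: "complex^'n^'n"
proof -
  have "((mat z + A) *v v) $ i = (\<Sum>j\<in>UNIV. (if i = j then z else 0) * v$j + A$i$j * v$j)"
    by (simp add: matrix_vector_mult_def mat_def distrib_right)
  also have "\<dots> = z * v$i + (\<Sum>j\<in>UNIV. A$i$j * v$j)"
    by (simp add: sum.distrib sum_delta_mult)
  finally show ?thesis .
qed

lemma det_pos:
  assumes "Re z \<ge> 0" "z \<noteq> 0"
  shows "det (mat z + Mc) \<noteq> 0"
proof (rule det_nz_of_ker, rule ccontr)
  fix v assume h: "(mat z + Mc) *v v = 0" and nz: "v \<noteq> 0"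
  have ent: "z * v$i + (\<Sum>j\<in>UNIV. of_real (L$i$j / e i) * v$j) = 0" for i
    using arg_cong[OF h, of "\<lambda>x. x$i"] by (simp add: matvec_entry Mc_entry)
  have ent2: "of_real (e i) * z * v$i + (\<Sum>j\<in>UNIV. of_real (L$i$j) * v$j) = 0" for i
  proof -
    have "of_real (e i) * (z * v$i + (\<Sum>j\<in>UNIV. of_real (L$i$j / e i) * v$j)) = 0" using ent by simp
    moreover have "of_real (e i) * (\<Sum>j\<in>UNIV. of_real (L$i$j / e i) * v$j) = (\<Sum>j\<in>UNIV. of_real (L$i$j) * v$j)"
      using ene[of i] by (simp add: sum_distrib_left field_simps)
    ultimately show ?thesis by (simp add: distrib_left mult.assoc)
  qed
  define A where "A = (\<Sum>i\<in>UNIV. e i * (cmod (v$i))^2)"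
  define B where "B = (\<Sum>k\<in>K. w k * (cmod (\<Sum>i\<in>UNIV. of_real (c k$i) * v$i))^2)"
  have "(\<Sum>i\<in>UNIV. cnj (v$i) * (of_real (e i) * z * v$i + (\<Sum>j\<in>UNIV. of_real (L$i$j) * v$j))) = 0"
    using ent2 by simp
  moreover have "(\<Sum>i\<in>UNIV. cnj (v$i) * (of_real (e i) * z * v$i + (\<Sum>j\<in>UNIV. of_real (L$i$j) * v$j)))
      = z * of_real A + of_real B"
  proof -
    have r: "cnj (v$i) * (of_real (e i) * z * v$i) = z * of_real (e i * (cmod (v$i))^2)" for i
    proof -
      have "cnj (v$i) * (of_real (e i) * z * v$i) = z * of_real (e i) * (cnj (v$i) * v$i)"
        by (simp add: mult_ac)
      then show ?thesis by (simp add: cnj_mult_self)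
    qed
    have "(\<Sum>i\<in>UNIV. cnj (v$i) * (of_real (e i) * z * v$i + (\<Sum>j\<in>UNIV. of_real (L$i$j) * v$j)))
      = (\<Sum>i\<in>UNIV. z * of_real (e i * (cmod (v$i))^2)) + (\<Sum>i\<in>UNIV. cnj (v$i) * (\<Sum>j\<in>UNIV. of_real (L$i$j) * v$j))"
      by (simp only: distrib_left sum.distrib r)
    also have "\<dots> = z * of_real A + of_real B"
      unfolding qf A_def B_def by (simp only: sum_distrib_left of_real_sum)
    finally show ?thesis .
  qed
  ultimately have eq: "z * of_real A + of_real B = 0" by simp
  have Bnn: "B \<ge> 0" unfolding B_def by (intro sum_nonneg) (auto simp: wpos less_imp_le)
  obtain i where vi: "v$i \<noteq> 0" using nz by (auto simp: vec_eq_iff)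
  have Apos: "A > 0" unfolding A_def
    by (rule sum_pos2[where i=i]) (use vi epos in \<open>auto simp: less_imp_le\<close>)
  have "Im z * A = 0" using arg_cong[OF eq, of Im] by simp
  hence imz: "Im z = 0" using Apos by simp
  have "Re z * A + B = 0" using arg_cong[OF eq, of Re] by simp
  hence "Re z * A \<le> 0" using Bnn by linarith
  moreover have "Re z * A \<ge> 0" using assms(1) Apos by simp
  ultimately have "Re z * A = 0" by linarith
  hence "Re z = 0" using Apos by simp
  hence "z = 0" using imz by (simp add: complex_eqI)
  then show False using assms(2) by simp
qed

lemma det_N: "det (Mc + P0) \<noteq> 0"
proof (rule det_nz_of_ker)
  fix v assume h: "(Mc + P0) *v v = 0"
  define \<sigma> where "\<sigma> = (\<Sum>j\<in>UNIV. of_real (e j / T) * v$j)"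
  have ent: "(\<Sum>j\<in>UNIV. of_real (L$i$j / e i) * v$j) + \<sigma> = 0" for i
    using arg_cong[OF h, of "\<lambda>x. x$i"]
    by (simp add: matrix_vector_mult_def Mc_entry P0_def distrib_right sum.distrib \<sigma>_def)
  have ent2: "(\<Sum>j\<in>UNIV. of_real (L$i$j) * v$j) + of_real (e i) * \<sigma> = 0" for i
  proof -
    have "of_real (e i) * ((\<Sum>j\<in>UNIV. of_real (L$i$j / e i) * v$j) + \<sigma>) = 0" using ent by simp
    moreover have "of_real (e i) * (\<Sum>j\<in>UNIV. of_real (L$i$j / e i) * v$j) = (\<Sum>j\<in>UNIV. of_real (L$i$j) * v$j)"
      using ene[of i] by (simp add: sum_distrib_left field_simps)
    ultimately show ?thesis by (simp add: distrib_left)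
  qed
  have s1: "(\<Sum>i\<in>UNIV. (\<Sum>j\<in>UNIV. of_real (L$i$j) * v$j) + of_real (e i) * \<sigma>) = 0"
    by (simp add: ent2)
  have s2: "(\<Sum>i\<in>UNIV. \<Sum>j\<in>UNIV. of_real (L$i$j) * v$j) = (0::complex)"
  proof -
    have "(\<Sum>i\<in>UNIV. \<Sum>j\<in>UNIV. of_real (L$i$j) * v$j) = (\<Sum>j\<in>UNIV. of_real (\<Sum>i\<in>UNIV. L$i$j) * v$j)"
      by (subst sum.swap) (simp add: sum_distrib_right)
    then show ?thesis by (simp add: L_colsum)
  qed
  have s3: "(\<Sum>i\<in>UNIV. of_real (e i) * \<sigma>) = of_real T * \<sigma>"
    by (simp add: T_def tr_diag_def sum_distrib_right)
  have "of_real T * \<sigma> = 0" using s1 s2 s3 by (simp add: sum.distrib)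
  hence \<sigma>0: "\<sigma> = 0" using T_pos by simp
  hence Lv: "(\<Sum>j\<in>UNIV. of_real (L$i$j) * v$j) = 0" for i using ent2[of i] by simp
  define B where "B = (\<Sum>k\<in>K. w k * (cmod (\<Sum>i\<in>UNIV. of_real (c k$i) * v$i))^2)"
  have "of_real B = (0::complex)" using qf[of v] Lv by (simp add: B_def)
  hence "B = 0" by simp
  have nn: "\<And>k. k\<in>K \<Longrightarrow> 0 \<le> w k * (cmod (\<Sum>i\<in>UNIV. of_real (c k$i) * v$i))^2"
    using wpos by (simp add: less_imp_le)
  have "\<forall>k\<in>K. w k * (cmod (\<Sum>i\<in>UNIV. of_real (c k$i) * v$i))^2 = 0"
    using \<open>B = 0\<close> sum_nonneg_eq_0_iff[OF finK, of "\<lambda>k. w k * (cmod (\<Sum>i\<in>UNIV. of_real (c k$i) * v$i))^2"] nn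
    unfolding B_def by blast
  hence Sk: "\<forall>k\<in>K. (\<Sum>i\<in>UNIV. of_real (c k$i) * v$i) = (0::complex)"
    using wpos by force
  have re: "Re (v$i) = Re (v$j)" for i j
  proof -
    have "(\<chi> i. Re (v$i)) $ i = (\<chi> i. Re (v$i)) $ j"
    proof (rule conn, intro ballI)
      fix k assume "k \<in> K"
      then have "Re (\<Sum>i\<in>UNIV. of_real (c k$i) * v$i) = 0" using Sk by simp
      then show "(\<Sum>i\<in>UNIV. c k $ i * (\<chi> i. Re (v$i)) $ i) = 0" by (simp add: Re_sum)
    qed
    then show ?thesis by simp
  qed
  have im: "Im (v$i) = Im (v$j)" for i j
  proof -
    have "(\<chi> i. Im (v$i)) $ i = (\<chi> i. Im (v$i)) $ j"
    proof (rule conn, intro ballI)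
      fix k assume "k \<in> K"
      then have "Im (\<Sum>i\<in>UNIV. of_real (c k$i) * v$i) = 0" using Sk by simp
      then show "(\<Sum>i\<in>UNIV. c k $ i * (\<chi> i. Im (v$i)) $ i) = 0" by (simp add: Im_sum)
    qed
    then show ?thesis by simp
  qed
  have const: "v$i = v$j" for i j using re im complex_eqI by blast
  fix i0 :: 'n
  have "\<sigma> = (\<Sum>j\<in>UNIV. of_real (e j / T)) * v$i0"
    unfolding \<sigma>_def sum_distrib_right using const by (metis)
  also have "(\<Sum>j\<in>UNIV. of_real (e j / T)) = (1::complex)"
    using T_pos by (simp add: T_def tr_diag_def sum_divide_distrib[symmetric] flip: of_real_sum)
  finally have "v$i0 = 0" using \<sigma>0 by simp
  then show "v = 0" using const by (metis vec_eq_iff zero_index)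
qed


definition Cf :: "real^'p^'n \<Rightarrow> complex^'p^'n" where
  "Cf F = cmat (diagm (\<lambda>i. inverse (e i)) ** F)"

lemma tf_eq: "transfer_fun H e L F s = cmat H ** matrix_inv (mat s + Mc) ** Cf F"
  by (simp add: transfer_fun_def Mc_def Cf_def)

lemma const_cont: "isCont (\<lambda>s. (A::complex^'a^'b) $ i $ j) z"
  by simp

lemma matA_cont: "isCont (\<lambda>s. (mat s + B) $ i $ j) z" for B :: "complex^'n^'n"
  by (cases "i = j") (simp_all add: mat_def)

lemma tf_cont:
  assumes "Re z \<ge> 0" "z \<noteq> 0"
  shows "isCont (\<lambda>s. transfer_fun H e L F s $ i $ j) z"
  unfolding tf_eq
  by (intro mult_isCont const_cont inv_isCont matA_cont det_pos assms)

definition "Bm s = mat s + Mc + P0"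
definition "Q = mat 1 - P0"
definition "gfun H F s = cmat H ** (matrix_inv (Bm s) ** Q) ** Cf F"
definition "Rm H F = (\<chi> i j. complex_of_real ((\<Sum>k\<in>UNIV. H$i$k) * (\<Sum>k\<in>UNIV. F$k$j) / T))"

lemma Bm_cont: "isCont (\<lambda>s. Bm s $ i $ j) z"
  unfolding Bm_def by (cases "i = j") (simp_all add: mat_def)

lemma g_cont: "isCont (\<lambda>s. gfun H F s $ i $ j) 0"
  unfolding gfun_def
  by (intro mult_isCont const_cont inv_isCont Bm_cont) (simp add: Bm_def det_N)

lemma HPC: "cmat H ** P0 ** Cf F = Rm H F"
proof -
  have "(\<Sum>k\<in>UNIV. (\<Sum>l\<in>UNIV. of_real (H$i$l) * of_real (e k / T)) * of_real (inverse (e k) * F$k$j))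
      = (complex_of_real ((\<Sum>k\<in>UNIV. H$i$k) * (\<Sum>k\<in>UNIV. F$k$j) / T))" for i j
  proof -
    have "(\<Sum>k\<in>UNIV. (\<Sum>l\<in>UNIV. of_real (H$i$l) * of_real (e k / T)) * of_real (inverse (e k) * F$k$j))
      = (complex_of_real (\<Sum>k\<in>UNIV. (\<Sum>l\<in>UNIV. H$i$l * (e k / T)) * (inverse (e k) * F$k$j)))"
      by (simp only: of_real_sum of_real_mult)
    also have "(\<Sum>k\<in>UNIV. (\<Sum>l\<in>UNIV. H$i$l * (e k / T)) * (inverse (e k) * F$k$j))
       = (\<Sum>k\<in>UNIV. (\<Sum>l\<in>UNIV. H$i$l) / T * F$k$j)"
    proof (rule sum.cong[OF refl])
      fix k
      have "(\<Sum>l\<in>UNIV. H$i$l * (e k / T)) = (\<Sum>l\<in>UNIV. H$i$l) * (e k / T)"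
        by (simp only: sum_distrib_right)
      then show "(\<Sum>l\<in>UNIV. H$i$l * (e k / T)) * (inverse (e k) * F$k$j) = (\<Sum>l\<in>UNIV. H$i$l) / T * F$k$j"
        using ene[of k] by (simp add: field_simps)
    qed
    also have "\<dots> = (\<Sum>k\<in>UNIV. H$i$k) / T * (\<Sum>k\<in>UNIV. F$k$j)"
      by (simp only: sum_distrib_left)
    also have "\<dots> = (\<Sum>k\<in>UNIV. H$i$k) * (\<Sum>k\<in>UNIV. F$k$j) / T"
      by simp
    finally show ?thesis .
  qed
  note main = this
  have Cf_entry: "Cf F $ k $ j = of_real (inverse (e k) * F$k$j)" for k j
    by (simp add: Cf_def cmat_def diagm_mult)
  have "(cmat H ** P0 ** Cf F) $ i $ j = Rm H F $ i $ j" for i j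
  proof -
    have "(cmat H ** P0 ** Cf F) $ i $ j = (\<Sum>k\<in>UNIV. (\<Sum>l\<in>UNIV. of_real (H$i$l) * of_real (e k / T)) * of_real (inverse (e k) * F$k$j))"
      by (simp only: matrix_matrix_mult_def vec_lambda_beta cmat_def P0_def Cf_entry)
    then show ?thesis by (simp only: main Rm_def vec_lambda_beta)
  qed
  then show ?thesis by (simp add: vec_eq_iff)
qed

lemma inv_decomp:
  assumes s0: "s \<noteq> 0" and d: "det (Bm s) \<noteq> 0"
  shows "matrix_inv (mat s + Mc) = smat (1/s) P0 + matrix_inv (Bm s) ** Q"
proof (rule matrix_inv_eq)
  let ?A = "mat s + Mc" and ?B = "Bm s" and ?Y = "matrix_inv (Bm s)"
  have BY: "?B ** ?Y = mat 1" by (rule matrix_inv_right[OF d])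
  hence YB: "?Y ** ?B = mat 1" using matrix_left_right_inverse by blast
  have PB: "P0 ** ?B = smat s P0 + P0"
    by (simp add: Bm_def matrix_add_ldistrib mult_mat_r P0_Mc P0_P0)
  have BP: "?B ** P0 = smat s P0 + P0"
    by (simp add: Bm_def madd_r mat_mult_l Mc_P0 P0_P0)
  have comm: "?Y ** P0 = P0 ** ?Y"
  proof -
    have "?Y ** P0 = ?Y ** P0 ** (?B ** ?Y)" by (simp add: BY)
    also have "\<dots> = ?Y ** (P0 ** ?B) ** ?Y" by (simp add: matrix_mul_assoc)
    also have "\<dots> = ?Y ** (?B ** P0) ** ?Y" by (simp add: PB BP)
    also have "\<dots> = (?Y ** ?B) ** P0 ** ?Y" by (simp add: matrix_mul_assoc)
    also have "\<dots> = P0 ** ?Y" by (simp add: YB)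
    finally show ?thesis .
  qed
  have PQ: "P0 ** Q = 0" by (simp add: Q_def msub_l P0_P0)
  have AP: "?A ** P0 = smat s P0" by (simp add: madd_r mat_mult_l Mc_P0)
  have A_eq: "?A = ?B - P0" by (simp add: Bm_def)
  have "?A ** smat (1/s) P0 = P0"
    using s0 by (simp add: smat_mult_left AP smat_smat smat_one)
  moreover have "?A ** (?Y ** Q) = Q"
  proof -
    have "?A ** (?Y ** Q) = (?B ** ?Y) ** Q - P0 ** ?Y ** Q"
      by (simp add: A_eq msub_r matrix_mul_assoc)
    also have "P0 ** ?Y ** Q = ?Y ** (P0 ** Q)" by (simp add: comm[symmetric] matrix_mul_assoc)
    finally show ?thesis by (simp add: BY PQ mzero_r)
  qed
  ultimately show "?A ** (smat (1/s) P0 + ?Y ** Q) = mat 1"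
    by (simp add: matrix_add_ldistrib Q_def)
qed

lemma tf_zero:
  "eventually (\<lambda>s. \<forall>i j. transfer_fun H e L F s $ i $ j = Rm H F $ i $ j / s + gfun H F s $ i $ j) (at 0)"
proof -
  have cd: "isCont (\<lambda>s. det (Bm s)) 0" by (intro det_isCont Bm_cont)
  have "det (Bm 0) \<noteq> 0" by (simp add: Bm_def det_N)
  then have ev1: "eventually (\<lambda>s. det (Bm s) \<noteq> 0) (at 0)"
    using cd unfolding isCont_def by (rule tendsto_imp_eventually_ne[rotated])
  have ev2: "eventually (\<lambda>s. s \<noteq> (0::complex)) (at 0)"
    by (simp add: eventually_at_filter)
  show ?thesis using ev1 ev2
  proof eventually_elim
    case (elim s)
    have "transfer_fun H e L F s = cmat H ** (smat (1/s) P0 + matrix_inv (Bm s) ** Q) ** Cf F"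
      using elim by (simp add: tf_eq inv_decomp)
    also have "\<dots> = smat (1/s) (Rm H F) + gfun H F s"
      by (simp add: matrix_add_ldistrib madd_r smat_mult_left smat_mult_right HPC[symmetric] gfun_def matrix_mul_assoc)
    finally show ?case by (simp add: smat_def divide_inverse mult.commute)
  qed
qed

end

lemma col_sum_D:
  assumes "incidence_matrix (D::real^'e^'n)"
  shows "(\<Sum>i\<in>UNIV. D$i$l) = 0"
proof -
  obtain i j where ij: "i \<noteq> j" "D$i$l = 1" "D$j$l = -1" "\<And>k. k \<noteq> i \<and> k \<noteq> j \<longrightarrow> D$k$l = 0"
    using assms unfolding incidence_matrix_def by blast
  have "(\<Sum>k\<in>UNIV. D$k$l) = D$i$l + D$j$l" by (rule sum_two) (use ij in auto)
  then show ?thesis using ij by simp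
qed

lemma conn_D:
  assumes inc: "incidence_matrix (D::real^'e^'n)" and con: "connected_incidence D"
    and h: "\<forall>l. (\<Sum>i\<in>UNIV. D$i$l * u$i) = 0"
  shows "u$a = u$b"
proof -
  have adj: "u$x = u$y" if xy: "(x,y) \<in> adj D" for x y
  proof -
    obtain l where l: "D$x$l \<noteq> 0" "D$y$l \<noteq> 0" "x \<noteq> y" using xy unfolding adj_def by blast
    obtain i j where ij: "i \<noteq> j" "D$i$l = 1" "D$j$l = -1" "\<And>k. k \<noteq> i \<and> k \<noteq> j \<longrightarrow> D$k$l = 0"
      using inc unfolding incidence_matrix_def by blast
    have "(\<Sum>k\<in>UNIV. D$k$l * u$k) = D$i$l * u$i + D$j$l * u$j" by (rule sum_two) (use ij in auto)
    then have "u$i = u$j" using h ij by simp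
    moreover have "x = i \<or> x = j" "y = i \<or> y = j" using l ij by blast+
    ultimately show ?thesis using l by auto
  qed
  have "(a,b) \<in> (adj D)\<^sup>*" using con unfolding connected_incidence_def by blast
  then show ?thesis
  proof (induction rule: rtrancl_induct)
    case base then show ?case by simp
  next
    case (step y z) then show ?case using adj by simp
  qed
qed

lemma L_orig: "D ** diagm w ** transpose D = (\<Sum>l\<in>UNIV. w l *\<^sub>R (\<chi> i j. column l D $ i * column l D $ j))"
  for D :: "real^'e^'n"
  by (simp add: vec_eq_iff matrix_matrix_mult_def diagm_def transpose_def column_def sum_delta_mult mult_ac)

lemma lap_orig:
  assumes "incidence_matrix (D::real^'e^'n)" "connected_incidence D" "\<forall>l. w l > 0" "\<forall>i. e i > 0"
  shows "lap (D ** diagm w ** transpose D) e UNIV w (\<lambda>l. column l D)"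
proof
  show "(\<Sum>i\<in>UNIV. column k D $ i) = 0" for k using col_sum_D[OF assms(1)] by (simp add: column_def)
  show "(v::real^'n) $ i = v $ j" if "\<forall>k\<in>UNIV. (\<Sum>i\<in>UNIV. column k D $ i * v $ i) = 0" for v i j
    by (rule conn_D[OF assms(1,2)]) (use that in \<open>simp add: column_def\<close>)
qed (use assms L_orig in auto)

lemma clus_row:
  assumes "clustering_matrix (P::real^'r^'n)" "P$i$a = 1"
  shows "P$i$b = (if b = a then 1 else 0)"
  using assms unfolding clustering_matrix_def by metis

lemma clus_rowsum:
  assumes "clustering_matrix (P::real^'r^'n)"
  shows "(\<Sum>a\<in>UNIV. P$i$a) = 1"
proof -
  obtain a where a: "P$i$a = 1" using assms unfolding clustering_matrix_def by blast
  have "(\<Sum>b\<in>UNIV. P$i$b) = (\<Sum>b\<in>UNIV. if b = a then 1 else 0)"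
    using clus_row[OF assms a] by simp
  then show ?thesis by simp
qed

lemma colPD: "column l (transpose P ** D) $ a = (\<Sum>i\<in>UNIV. P$i$a * D$i$l)"
  by (simp add: column_def matrix_matrix_mult_def transpose_def)

lemma lap_red:
  assumes inc: "incidence_matrix (D::real^'e^'n)" and con: "connected_incidence D"
    and cl: "clustering_matrix (P::real^'r^'n)"
    and wp: "\<forall>c\<in>reduced_edges P D. wh c > 0" and ep: "\<forall>k. eh k > 0"
  shows "lap (reduced_laplacian P D wh) eh (reduced_edges P D) wh id"
proof
  have "reduced_edges P D \<subseteq> range (\<lambda>l. column l (transpose P ** D))"
    by (auto simp: reduced_edges_def columns_def)
  then show "finite (reduced_edges P D)" by (rule finite_subset) simp
next
  fix k assume "k \<in> reduced_edges P D"
  then obtain l where k: "k = column l (transpose P ** D)" by (auto simp: reduced_edges_def columns_def)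
  have "(\<Sum>a\<in>UNIV. \<Sum>i\<in>UNIV. P$i$a * D$i$l) = (\<Sum>i\<in>UNIV. D$i$l * (\<Sum>a\<in>UNIV. P$i$a))"
    by (subst sum.swap) (simp add: sum_distrib_left mult_ac)
  also have "\<dots> = 0" using clus_rowsum[OF cl] col_sum_D[OF inc] by simp
  finally show "(\<Sum>i\<in>UNIV. id k $ i) = 0" by (simp add: k colPD)
next
  fix v :: "real^'r" and a b
  assume h: "\<forall>k\<in>reduced_edges P D. (\<Sum>i\<in>UNIV. id k $ i * v $ i) = 0"
  define u where "u = (\<chi> i. \<Sum>a\<in>UNIV. P$i$a * v$a)"
  have hu: "\<forall>l. (\<Sum>i\<in>UNIV. D$i$l * u$i) = 0"
  proof
    fix l
    let ?c = "column l (transpose P ** D)"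
    have "(\<Sum>a\<in>UNIV. ?c $ a * v $ a) = 0"
    proof (cases "?c = 0")
      case True then show ?thesis by simp
    next
      case False
      then have "?c \<in> reduced_edges P D" by (auto simp: reduced_edges_def columns_def)
      then show ?thesis using h by simp
    qed
    moreover have "(\<Sum>a\<in>UNIV. ?c $ a * v $ a) = (\<Sum>i\<in>UNIV. D$i$l * u$i)"
      unfolding colPD u_def
      by (simp add: sum_distrib_left sum_distrib_right mult_ac) (rule sum.swap)
    ultimately show "(\<Sum>i\<in>UNIV. D$i$l * u$i) = 0" by simp
  qed
  have uv: "\<exists>i. u$i = v$x" for x
  proof -
    obtain i where i: "P$i$x = 1" using cl unfolding clustering_matrix_def by blast
    have "u$i = (\<Sum>b\<in>UNIV. P$i$b * v$b)" by (simp add: u_def)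
    also have "\<dots> = (\<Sum>b\<in>UNIV. if b = x then v$b else 0)"
      by (rule sum.cong) (auto simp: clus_row[OF cl i])
    also have "\<dots> = v$x" by simp
    finally show ?thesis by blast
  qed
  obtain i where i: "u$i = v$a" using uv by blast
  obtain j where j: "u$j = v$b" using uv by blast
  have "u$i = u$j" by (rule conn_D[OF inc con hu])
  then show "v$a = v$b" using i j by simp
qed (use wp ep in \<open>auto simp: reduced_laplacian_def\<close>)


lemma no_pole_of_tendsto:
  assumes "((f::complex \<Rightarrow> complex) \<longlongrightarrow> l) (at z)"
  shows "\<not> is_pole f z"
  using not_tendsto_and_filterlim_at_infinity[OF at_neq_bot assms] unfolding is_pole_def by blast

theorem lemma1:
  fixes D :: "real^'e^'n" and w :: "'e \<Rightarrow> real" and e :: "'n \<Rightarrow> real"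
    and F :: "real^'p^'n" and H :: "real^'n^'q"
    and P :: "real^'r^'n"
    and wh :: "real^'r \<Rightarrow> real" and eh :: "'r \<Rightarrow> real"
    and \<alpha> \<beta> :: real
  assumes "incidence_matrix D" and "simple_incidence D" and "connected_incidence D"
    and "\<forall>l. w l > 0" and "\<forall>i. e i > 0"
    and "clustering_matrix P"
    and "\<forall>c\<in>reduced_edges P D. wh c > 0" and "\<forall>k. eh k > 0"
    and "\<alpha> * \<beta> = tr_diag eh / tr_diag e"
  shows "bibo_stable (\<lambda>s.
           transfer_fun H e (D ** diagm w ** transpose D) F s
           - transfer_fun (\<alpha> *\<^sub>R (H ** P)) eh (reduced_laplacian P D wh)
               (\<beta> *\<^sub>R (transpose P ** F)) s)"
proof -
  interpret o: lap "D ** diagm w ** transpose D" e UNIV w "\<lambda>l. column l D"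
    by (rule lap_orig) (use assms in auto)
  interpret r: lap "reduced_laplacian P D wh" eh "reduced_edges P D" wh id
    by (rule lap_red) (use assms in auto)
  let ?G1 = "transfer_fun H e (D ** diagm w ** transpose D) F"
  let ?H2 = "\<alpha> *\<^sub>R (H ** P)" and ?F2 = "\<beta> *\<^sub>R (transpose P ** F)"
  let ?G2 = "transfer_fun ?H2 eh (reduced_laplacian P D wh) ?F2"
  have Req: "o.Rm H F = r.Rm ?H2 ?F2"
  proof -
    have h2: "(\<Sum>a\<in>UNIV. ?H2$i$a) = \<alpha> * (\<Sum>k\<in>UNIV. H$i$k)" for i
    proof -
      have "(\<Sum>a\<in>UNIV. ?H2$i$a) = \<alpha> * (\<Sum>a\<in>UNIV. \<Sum>k\<in>UNIV. H$i$k * P$k$a)"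
        by (simp add: matrix_matrix_mult_def sum_distrib_left)
      also have "(\<Sum>a\<in>UNIV. \<Sum>k\<in>UNIV. H$i$k * P$k$a) = (\<Sum>k\<in>UNIV. H$i$k * (\<Sum>a\<in>UNIV. P$k$a))"
        by (subst sum.swap) (simp add: sum_distrib_left)
      finally show ?thesis using clus_rowsum[OF assms(6)] by simp
    qed
    have f2: "(\<Sum>a\<in>UNIV. ?F2$a$j) = \<beta> * (\<Sum>k\<in>UNIV. F$k$j)" for j
    proof -
      have "(\<Sum>a\<in>UNIV. ?F2$a$j) = \<beta> * (\<Sum>a\<in>UNIV. \<Sum>k\<in>UNIV. P$k$a * F$k$j)"
        by (simp add: matrix_matrix_mult_def sum_distrib_left transpose_def)
      also have "(\<Sum>a\<in>UNIV. \<Sum>k\<in>UNIV. P$k$a * F$k$j) = (\<Sum>k\<in>UNIV. (\<Sum>a\<in>UNIV. P$k$a) * F$k$j)"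
        by (subst sum.swap) (simp add: sum_distrib_right)
      finally show ?thesis using clus_rowsum[OF assms(6)] by simp
    qed
    have Tp: "r.T > 0" "o.T > 0" by (rule r.T_pos, rule o.T_pos)
    have ab: "\<alpha> * \<beta> = r.T / o.T" using assms(9) by (simp add: r.T_def o.T_def)
    have "(\<alpha> * X) * (\<beta> * Y) / r.T = X * Y / o.T" for X Y
    proof -
      have "(\<alpha> * X) * (\<beta> * Y) / r.T = (\<alpha> * \<beta>) * (X * Y) / r.T" by (simp add: mult_ac)
      also have "\<dots> = X * Y / o.T" using Tp by (simp add: ab field_simps)
      finally show ?thesis .
    qed
    then have "(\<Sum>a\<in>UNIV. ?H2$i$a) * (\<Sum>a\<in>UNIV. ?F2$a$j) / r.T =
        (\<Sum>k\<in>UNIV. H$i$k) * (\<Sum>k\<in>UNIV. F$k$j) / o.T" for i j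
      by (simp only: h2 f2)
    then show ?thesis unfolding o.Rm_def r.Rm_def by (simp only:)
  qed
  show ?thesis unfolding bibo_stable_def
  proof (intro allI impI)
    fix i j z
    assume pole: "is_pole (\<lambda>s. (?G1 s - ?G2 s) $ i $ j) z"
    show "Re z < 0"
    proof (rule ccontr)
      assume "\<not> Re z < 0"
      then have rz: "Re z \<ge> 0" by simp
      have "\<exists>l. ((\<lambda>s. (?G1 s - ?G2 s) $ i $ j) \<longlongrightarrow> l) (at z)"
      proof (cases "z = 0")
        case False
        have c1: "isCont (\<lambda>s. ?G1 s $ i $ j) z" by (rule o.tf_cont[OF rz False])
        have c2: "isCont (\<lambda>s. ?G2 s $ i $ j) z" by (rule r.tf_cont[OF rz False])
        have "((\<lambda>s. ?G1 s $ i $ j - ?G2 s $ i $ j) \<longlongrightarrow> ?G1 z $ i $ j - ?G2 z $ i $ j) (at z)"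
          using c1 c2 unfolding isCont_def by (rule tendsto_diff)
        then show ?thesis by auto
      next
        case True
        have c1: "isCont (\<lambda>s. o.gfun H F s $ i $ j) 0" by (rule o.g_cont)
        have c2: "isCont (\<lambda>s. r.gfun ?H2 ?F2 s $ i $ j) 0" by (rule r.g_cont)
        have t: "((\<lambda>s. o.gfun H F s $ i $ j - r.gfun ?H2 ?F2 s $ i $ j) \<longlongrightarrow>
            o.gfun H F 0 $ i $ j - r.gfun ?H2 ?F2 0 $ i $ j) (at 0)"
          using c1 c2 unfolding isCont_def by (rule tendsto_diff)
        have ev: "eventually (\<lambda>s. o.gfun H F s $ i $ j - r.gfun ?H2 ?F2 s $ i $ j = (?G1 s - ?G2 s) $ i $ j) (at 0)"
          using o.tf_zero[of H F] r.tf_zero[of ?H2 ?F2]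
        proof eventually_elim
          case (elim s)
          then show ?case using Req by simp
        qed
        show ?thesis using Lim_transform_eventually[OF t ev] True by blast
      qed
      then obtain l where "((\<lambda>s. (?G1 s - ?G2 s) $ i $ j) \<longlongrightarrow> l) (at z)" by blast
      then show False using no_pole_of_tendsto pole by blast
    qed
  qed
qed

end
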